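(* Let $P_{\mathrm{app}}=\sum_{i=0}^na_iX^i\in K[X]$ be monic of degree $n$, and let $0<d<n$ be such that $(d,\mathrm{val}(a_d))$ is an extremal point of $\mathrm{NP}(P_{\mathrm{app}})$, with $a_j\ne0$ for some $j<d$. Let $\varphi_P$ be a Newton function of degree $n-1$ which is nondegenerate for $P_{\mathrm{app}}$, in the following sense: - $\varphi_P\ge\mathrm{NF}(P_{\mathrm{app}})$ on $[0,n-1]$; - $\varphi_P(x)>y$ for every extremal point $(x,y)$ of $\mathrm{NP}(P_{\mathrm{app}})$ with $x\le n-1$. Let $\varphi$ be as defined in the context and set $$\delta=\min_{x\in[0,n-1]}\big(\varphi_P(x)-\varphi(x)\big).$$ Assume $\delta>0$. Let $\delta P\in K_{\le n-1}[X]$ satisfy $\mathrm{val}(c_i)\ge\varphi_P(i)$ for all $0\le i\le n-1$, where $c_i$ is the coefficient of $X^i$ in $\delta P$, and put $P=P_{\mathrm{app}}+\delta P$. Then $\mathrm{NF}(P)=\mathrm{NF}(P_{\mathrm{app}})$. Let $A^{(1)}$ (resp. $A^{(1)}_{\mathrm{app}}$) be the unique monic divisor of $P$ (resp. of $P_{\mathrm{app}}$) of degree $d$ whose Newton function is $\mathrm{NF}(P_{\mathrm{app}})|_{[0,d]}-\mathrm{NF}(P_{\mathrm{app}})(d)$. Then for every $0\le i\le d-1$, the coefficient of $X^i$ in $A^{(1)}-A^{(1)}_{\mathrm{app}}$ has valuation at least $\varphi(i)-\varphi(d)+\delta$.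
   Context: $K$ is a complete discrete valuation field with valuation $\mathrm{val}:K\to\mathbb Z\cup\{+\infty\}$, normalized to be surjective. $K_{\le m}[X]$ denotes the polynomials of degree at most $m$. For $Q=\sum q_iX^i\in K[X]$ nonzero of degree $m$, $\mathrm{NF}(Q):[0,m]\to\mathbb R\cup\{+\infty\}$ is the greatest convex function with $\mathrm{NF}(Q)(i)\le\mathrm{val}(q_i)$ for all $0\le i\le m$. Its epigraph is the Newton polygon $\mathrm{NP}(Q)$, and an extremal point is a vertex of it. A Newton function of degree $m$ is a convex, piecewise affine function $[0,m]\to\mathbb R\cup\{+\infty\}$, finite at $m$, whose epigraph has extremal points with integral abscissae. Set $\lambda_0=\mathrm{NF}(P_{\mathrm{app}})(d)-\mathrm{NF}(P_{\mathrm{app}})(d-1)$. The function $\varphi:[0,+\infty)\to\mathbb R\cup\{+\infty\}$ is defined by $\varphi(x)=\mathrm{NF}(P_{\mathrm{app}})(x)$ for $x\le d$ and $\varphi(x)=\lambda_0(x-d)+\mathrm{NF}(P_{\mathrm{app}})(d)$ for $x>d$. Existence and uniqueness of the monic divisors in the statement: a polynomial whose Newton polygon has an extremal point at abscissa $d$ has a unique monic divisor of degree $d$ whose Newton function is the restriction of its own Newton function to $[0,d]$, shifted by a constant so that its value at $d$ is $0$. *)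

theory Defs
  imports "HOL-Analysis.Analysis" "HOL-Computational_Algebra.Polynomial"
begin

definition discrete_valuation :: "('k::field \<Rightarrow> ereal) \<Rightarrow> bool" where
  "discrete_valuation val \<longleftrightarrow>
     (\<forall>x. val x = \<infinity> \<longleftrightarrow> x = 0) \<and>
     (\<forall>x y. val (x * y) = val x + val y) \<and>
     (\<forall>x y. min (val x) (val y) \<le> val (x + y)) \<and>
     range val = {ereal (of_int k) | k. True} \<union> {\<infinity>}"

definition complete_valuation :: "('k::field \<Rightarrow> ereal) \<Rightarrow> bool" where
  "complete_valuation val \<longleftrightarrow>
     (\<forall>s :: nat \<Rightarrow> 'k.
        (\<forall>M::real. \<exists>N. \<forall>m\<ge>N. \<forall>n\<ge>N. ereal M \<le> val (s m - s n)) \<longrightarrow>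
        (\<exists>L. \<forall>M::real. \<exists>N. \<forall>n\<ge>N. ereal M \<le> val (s n - L)))"

definition convex_ereal_on :: "real set \<Rightarrow> (real \<Rightarrow> ereal) \<Rightarrow> bool" where
  "convex_ereal_on S f \<longleftrightarrow>
     (\<forall>x\<in>S. f x \<noteq> -\<infinity>) \<and>
     (\<forall>x\<in>S. \<forall>y\<in>S. \<forall>t::real. 0 \<le> t \<and> t \<le> 1 \<longrightarrow>
        f (t * x + (1 - t) * y) \<le> ereal t * f x + ereal (1 - t) * f y)"

definition epigraph_on :: "real \<Rightarrow> (real \<Rightarrow> ereal) \<Rightarrow> (real \<times> real) set" where
  "epigraph_on m f = {(x, y). 0 \<le> x \<and> x \<le> m \<and> f x \<le> ereal y}"

definition newton_fun :: "('k::field \<Rightarrow> ereal) \<Rightarrow> 'k poly \<Rightarrow> real \<Rightarrow> ereal" where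
  "newton_fun val Q x =
     (SUP f \<in> {f. convex_ereal_on {0..real (degree Q)} f \<and>
                 (\<forall>i\<le>degree Q. f (real i) \<le> val (coeff Q i))}. f x)"

definition newton_polygon :: "('k::field \<Rightarrow> ereal) \<Rightarrow> 'k poly \<Rightarrow> (real \<times> real) set" where
  "newton_polygon val Q = epigraph_on (real (degree Q)) (newton_fun val Q)"

definition piecewise_affine_ereal_on :: "real \<Rightarrow> (real \<Rightarrow> ereal) \<Rightarrow> bool" where
  "piecewise_affine_ereal_on m f \<longleftrightarrow>
     (\<exists>S. finite S \<and> 0 \<in> S \<and> m \<in> S \<and> S \<subseteq> {0..m} \<and>
        (\<forall>s\<in>S. \<forall>t\<in>S. s < t \<and> {s<..<t} \<inter> S = {} \<longrightarrow>
           (\<exists>a b. \<forall>x\<in>{s..t}. f x = ereal (a * x + b)) \<or>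
           (\<forall>x\<in>{s..<t}. f x = \<infinity>)))"

definition newton_function :: "nat \<Rightarrow> (real \<Rightarrow> ereal) \<Rightarrow> bool" where
  "newton_function m f \<longleftrightarrow>
     convex_ereal_on {0..real m} f \<and>
     piecewise_affine_ereal_on (real m) f \<and>
     f (real m) \<noteq> \<infinity> \<and>
     (\<forall>x y. (x, y) extreme_point_of epigraph_on (real m) f \<longrightarrow> x \<in> \<int>)"

definition phi_ext :: "('k::field \<Rightarrow> ereal) \<Rightarrow> 'k poly \<Rightarrow> nat \<Rightarrow> real \<Rightarrow> ereal" where
  "phi_ext val Papp d x =
     (let lam0 = newton_fun val Papp (real d) - newton_fun val Papp (real d - 1)
      in if x \<le> real d then newton_fun val Papp x
         else lam0 * ereal (x - real d) + newton_fun val Papp (real d))"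

end

theory Submission
  imports Defs
begin

locale dvl =
  fixes val :: "'k::field \<Rightarrow> ereal"
  assumes dv: "discrete_valuation val"
begin

lemma val_inf_iff: "val x = \<infinity> \<longleftrightarrow> x = 0"
  using dv unfolding discrete_valuation_def by blast

lemma val_zero[simp]: "val 0 = \<infinity>" using val_inf_iff by simp

lemma val_mult: "val (x * y) = val x + val y"
  using dv unfolding discrete_valuation_def by blast

lemma val_add: "min (val x) (val y) \<le> val (x + y)"
  using dv unfolding discrete_valuation_def by blast

lemma val_not_minf[simp]: "val x \<noteq> -\<infinity>"
proof
  assume "val x = -\<infinity>"
  moreover have "val x \<in> range val" by simp
  ultimately show False using dv unfolding discrete_valuation_def by auto
qed

lemma val_fin: "x \<noteq> 0 \<Longrightarrow> \<exists>r. val x = ereal r"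
  using val_inf_iff[of x] val_not_minf[of x] by (cases "val x") auto

lemma val_one[simp]: "val 1 = 0"
proof -
  obtain r where r: "val 1 = ereal r" using val_fin[of 1] by auto
  have "val 1 = val 1 + val 1" using val_mult[of 1 1] by simp
  with r show ?thesis by (simp add: zero_ereal_def)
qed

lemma val_m1[simp]: "val (-1) = 0"
proof -
  obtain r where r: "val (-1) = ereal r" using val_fin[of "-1"] by auto
  have "0 = val (-1) + val (-1)" using val_mult[of "-1" "-1"] by simp
  with r show ?thesis by (simp add: zero_ereal_def)
qed

lemma val_uminus[simp]: "val (- x) = val x"
  using val_mult[of "-1" x] by simp

lemma val_diff: "min (val x) (val y) \<le> val (x - y)"
  using val_add[of x "-y"] by simp

lemma val_strict: assumes "val x < val y" shows "val (x + y) = val x"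
proof -
  have 1: "val x \<le> val (x + y)" using val_add[of x y] assms by simp
  have "min (val (x+y)) (val y) \<le> val ((x + y) + - y)" using val_add[of "x+y" "-y"] by simp
  hence "min (val (x+y)) (val y) \<le> val x" by simp
  with assms have "val (x+y) \<le> val x" by (auto simp: min_def split: if_splits)
  with 1 show ?thesis by simp
qed

lemma lb_add: "c \<le> val x \<Longrightarrow> c \<le> val y \<Longrightarrow> c \<le> val (x + y)"
  using val_add[of x y] by (meson min.boundedI order_trans)
lemma lb_diff: "c \<le> val x \<Longrightarrow> c \<le> val y \<Longrightarrow> c \<le> val (x - y)"
  using lb_add[of c x "-y"] by simp
lemma slb_add: "c < val x \<Longrightarrow> c < val y \<Longrightarrow> c < val (x + y)"
  using val_add[of x y] by (meson min_less_iff_conj order_less_le_trans)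

lemma lb_sum: "finite I \<Longrightarrow> (\<And>i. i \<in> I \<Longrightarrow> c \<le> val (f i)) \<Longrightarrow> c \<le> val (sum f I)"
  by (induction I rule: finite_induct) (auto intro: lb_add)
lemma slb_sum: "finite I \<Longrightarrow> (\<And>i. i \<in> I \<Longrightarrow> ereal c < val (f i)) \<Longrightarrow> ereal c < val (sum f I)"
  by (induction I rule: finite_induct) (auto intro: slb_add)

lemma lb_mult: assumes "ereal a \<le> val x" "ereal b \<le> val y" shows "ereal (a + b) \<le> val (x * y)"
proof -
  have "ereal a + ereal b \<le> val x + val y" using assms by (intro add_mono) auto
  thus ?thesis by (simp add: val_mult)
qed

lemma slb_mult: assumes "ereal a < val x" "ereal b \<le> val y" shows "ereal (a + b) < val (x * y)"
proof (cases "y = 0")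
  case True thus ?thesis by simp
next
  case False
  then obtain r where r: "val y = ereal r" using val_fin by blast
  show ?thesis using assms r by (cases "val x") (auto simp: val_mult)
qed

lemma val_sum_strict:
  assumes "finite I" "i0 \<in> I" "\<And>i. i \<in> I - {i0} \<Longrightarrow> val (f i0) < val (f i)" "f i0 \<noteq> 0"
  shows "val (sum f I) = val (f i0)"
proof -
  obtain r where r: "val (f i0) = ereal r" using val_fin assms(4) by blast
  have "sum f I = f i0 + sum f (I - {i0})" using assms by (simp add: sum.remove)
  moreover have "val (f i0) < val (sum f (I - {i0}))" using assms unfolding r by (intro slb_sum) auto
  ultimately show ?thesis using val_strict by simp
qed

end


definition nfset :: "('k::field \<Rightarrow> ereal) \<Rightarrow> 'k poly \<Rightarrow> (real \<Rightarrow> ereal) set" where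
  "nfset val Q = {f. convex_ereal_on {0..real (degree Q)} f \<and>
                 (\<forall>i\<le>degree Q. f (real i) \<le> val (coeff Q i))}"

lemma newton_fun_eq: "newton_fun val Q x = (SUP f \<in> nfset val Q. f x)"
  unfolding newton_fun_def nfset_def by simp

lemma nf_le_coeff: "i \<le> degree Q \<Longrightarrow> newton_fun val Q (real i) \<le> val (coeff Q i)"
  unfolding newton_fun_eq by (rule SUP_least) (auto simp: nfset_def)

lemma nf_upper: "convex_ereal_on {0..real (degree Q)} f \<Longrightarrow>
   (\<And>i. i\<le>degree Q \<Longrightarrow> f (real i) \<le> val (coeff Q i)) \<Longrightarrow> f x \<le> newton_fun val Q x"
  unfolding newton_fun_eq by (rule SUP_upper) (auto simp: nfset_def)

lemma ereal_convcomb_const: "0 \<le> t \<Longrightarrow> t \<le> 1 \<Longrightarrow> c \<noteq> -\<infinity> \<Longrightarrow>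
   ereal t * c + ereal (1 - t) * c = c"
proof (cases c)
  case (real r) assume "0 \<le> t" "t \<le> 1" thus ?thesis using real by (simp add: algebra_simps)
next
  case PInf assume "0 \<le> t" "t \<le> 1"
  thus ?thesis using PInf by (cases "t = 0"; cases "t = 1") auto
qed auto

lemma (in dvl) nf_convex: "convex_ereal_on {0..real (degree Q)} (newton_fun val Q)"
proof -
  define c where "c = Min ((\<lambda>i. val (coeff Q i)) ` {..degree Q})"
  have "c \<in> (\<lambda>i. val (coeff Q i)) ` {..degree Q}" unfolding c_def by (rule Min_in) auto
  hence cn: "c \<noteq> -\<infinity>" by auto
  have cmem: "(\<lambda>x. c) \<in> nfset val Q"
    unfolding nfset_def convex_ereal_on_def using cn
    by (auto simp: ereal_convcomb_const c_def)
  have lb: "c \<le> newton_fun val Q x" for x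
    unfolding newton_fun_eq using cmem by (rule SUP_upper2) simp
  show ?thesis unfolding convex_ereal_on_def
  proof (intro conjI ballI allI impI)
    fix x assume "x \<in> {0..real (degree Q)}"
    show "newton_fun val Q x \<noteq> -\<infinity>" using lb[of x] cn by auto
  next
    fix x y and t :: real assume xy: "x \<in> {0..real (degree Q)}" "y \<in> {0..real (degree Q)}" and t: "0 \<le> t \<and> t \<le> 1"
    show "newton_fun val Q (t * x + (1 - t) * y)
          \<le> ereal t * newton_fun val Q x + ereal (1 - t) * newton_fun val Q y"
      unfolding newton_fun_eq[of _ _ "t * x + (1 - t) * y"]
    proof (rule SUP_least)
      fix f assume f: "f \<in> nfset val Q"
      hence "f (t * x + (1 - t) * y) \<le> ereal t * f x + ereal (1 - t) * f y"
        using xy t unfolding nfset_def convex_ereal_on_def by auto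
      also have "\<dots> \<le> ereal t * newton_fun val Q x + ereal (1 - t) * newton_fun val Q y"
        unfolding newton_fun_eq using f t
        by (intro add_mono ereal_mult_left_mono SUP_upper) auto
      finally show "f (t * x + (1 - t) * y)
          \<le> ereal t * newton_fun val Q x + ereal (1 - t) * newton_fun val Q y" .
    qed
  qed
qed

lemma (in dvl) nf_not_minf: "0 \<le> x \<Longrightarrow> x \<le> real (degree Q) \<Longrightarrow> newton_fun val Q x \<noteq> -\<infinity>"
  using nf_convex[of Q] unfolding convex_ereal_on_def by auto

lemma convex_ereal_fin:
  assumes "convex_ereal_on S f" "x \<in> S" "y \<in> S" "f x = ereal a" "f y = ereal b" "0 \<le> t" "t \<le> 1"
  shows "f (t * x + (1 - t) * y) \<le> ereal (t * a + (1 - t) * b)"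
  using assms unfolding convex_ereal_on_def by (metis times_ereal.simps(1) plus_ereal.simps(1))

lemma affine_convex_ereal: "convex_ereal_on S (\<lambda>x. ereal (c + s * x))"
  unfolding convex_ereal_on_def by (auto simp: algebra_simps)



locale nfq = dvl val for val :: "'k::field \<Rightarrow> ereal" +
  fixes Q :: "'k poly" and n :: nat
  assumes degQ: "degree Q = n" and lcQ: "coeff Q n \<noteq> 0"
begin

definition H :: "nat \<Rightarrow> ereal" where "H k = newton_fun val Q (real k)"

lemma H_le: "k \<le> n \<Longrightarrow> H k \<le> val (coeff Q k)"
  unfolding H_def using nf_le_coeff[of k Q val] degQ by simp

lemma H_nminf: "k \<le> n \<Longrightarrow> H k \<noteq> -\<infinity>"
  unfolding H_def using nf_not_minf[of "real k" Q] degQ by simp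

lemma H_n_fin: "H n \<noteq> \<infinity>"
proof -
  have "val (coeff Q n) \<noteq> \<infinity>" using lcQ val_inf_iff by simp
  thus ?thesis using H_le[of n] by auto
qed

lemma conv: "convex_ereal_on {0..real n} (newton_fun val Q)"
  using nf_convex[of Q] degQ by simp

lemma H_conv_fin:
  assumes "i \<le> j" "j \<le> k" "k \<le> n" "i < k" "H i = ereal a" "H k = ereal b"
  shows "H j \<le> ereal (((real k - real j) * a + (real j - real i) * b) / (real k - real i))"
proof -
  define t where "t = (real k - real j) / (real k - real i)"
  have t: "0 \<le> t" "t \<le> 1" using assms unfolding t_def by (auto simp: field_simps)
  have tk: "t * (real k - real i) = real k - real j" unfolding t_def using assms by simp
  have "t * real i + (1 - t) * real k = real k - t * (real k - real i)" by (simp add: algebra_simps)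
  hence "t * real i + (1 - t) * real k = real j" using tk by simp
  moreover have "t * a + (1 - t) * b = ((real k - real j) * a + (real j - real i) * b) / (real k - real i)"
  proof -
    have nz: "real k - real i \<noteq> 0" using assms by simp
    have "1 - t = (real j - real i) / (real k - real i)" unfolding t_def using nz
      by (simp add: field_simps)
    thus ?thesis unfolding t_def using nz by (simp add: add_divide_distrib)
  qed
  ultimately show ?thesis
    using convex_ereal_fin[OF conv, of "real i" "real k" a b t] assms t unfolding H_def by auto
qed

lemma H_fin_between:
  assumes "i \<le> j" "j \<le> k" "k \<le> n" "H i \<noteq> \<infinity>" "H k \<noteq> \<infinity>"
  shows "H j \<noteq> \<infinity>"
proof (cases "i < k")
  case True
  obtain a where a: "H i = ereal a" using assms H_nminf[of i] by (cases "H i") auto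
  obtain b where b: "H k = ereal b" using assms H_nminf[of k] by (cases "H k") auto
  show ?thesis using H_conv_fin[OF assms(1-3) True a b] by auto
next
  case False
  hence "i = j" using assms by linarith
  thus ?thesis using assms by simp
qed

definition j0 :: nat where "j0 = (LEAST k. H k \<noteq> \<infinity>)"

lemma j0_le: "j0 \<le> n" unfolding j0_def using H_n_fin by (rule Least_le)

lemma H_fin: "j0 \<le> k \<Longrightarrow> k \<le> n \<Longrightarrow> H k \<noteq> \<infinity>"
  using H_fin_between[of j0 k n] H_n_fin LeastI[of "\<lambda>k. H k \<noteq> \<infinity>" n]
  unfolding j0_def by auto

lemma H_inf: "k < j0 \<Longrightarrow> H k = \<infinity>"
  unfolding j0_def using not_less_Least by blast

lemma j0_leI: "k \<le> n \<Longrightarrow> H k \<noteq> \<infinity> \<Longrightarrow> j0 \<le> k"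
  using H_inf by (meson not_less)

definition hr :: "nat \<Rightarrow> real" where "hr k = real_of_ereal (H k)"

lemma H_hr: "j0 \<le> k \<Longrightarrow> k \<le> n \<Longrightarrow> H k = ereal (hr k)"
  unfolding hr_def using H_fin H_nminf by (cases "H k") auto

lemma coeff_zero_below: "k < j0 \<Longrightarrow> coeff Q k = 0"
proof -
  assume "k < j0"
  hence "H k = \<infinity>" by (rule H_inf)
  moreover have "k \<le> n" using \<open>k < j0\<close> j0_le by simp
  ultimately show ?thesis using H_le[of k] val_inf_iff by auto
qed

lemma hr_le_val: "j0 \<le> k \<Longrightarrow> k \<le> n \<Longrightarrow> ereal (hr k) \<le> val (coeff Q k)"
  using H_le H_hr by metis

lemma hr_conv:
  assumes "j0 \<le> i" "i \<le> j" "j \<le> k" "k \<le> n" "i < k"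
  shows "hr j \<le> ((real k - real j) * hr i + (real j - real i) * hr k) / (real k - real i)"
  using H_conv_fin[OF assms(2-5) H_hr H_hr] H_hr[of j] assms by auto

definition \<sigma> :: "nat \<Rightarrow> real" where "\<sigma> k = hr (Suc k) - hr k"

lemma sigma_step: assumes "j0 \<le> k" "Suc (Suc k) \<le> n" shows "\<sigma> k \<le> \<sigma> (Suc k)"
proof -
  have "hr (Suc k) \<le> ((real (Suc (Suc k)) - real (Suc k)) * hr k + (real (Suc k) - real k) * hr (Suc (Suc k)))
        / (real (Suc (Suc k)) - real k)"
    using assms by (intro hr_conv) auto
  thus ?thesis unfolding \<sigma>_def by (simp add: field_simps)
qed

lemma sigma_mono: assumes "j0 \<le> a" "a \<le> b" "Suc b \<le> n" shows "\<sigma> a \<le> \<sigma> b"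
  using assms
proof (induction b)
  case 0 thus ?case by simp
next
  case (Suc b)
  show ?case
  proof (cases "a = Suc b")
    case True thus ?thesis by simp
  next
    case False
    hence "\<sigma> a \<le> \<sigma> b" using Suc by auto
    also have "\<sigma> b \<le> \<sigma> (Suc b)" using Suc False by (intro sigma_step) auto
    finally show ?thesis .
  qed
qed

lemma hr_lower_right: assumes "j0 \<le> i" "i < n" "i \<le> j" "j \<le> n"
  shows "hr i + \<sigma> i * (real j - real i) \<le> hr j"
  using assms
proof (induction j)
  case 0 thus ?case by simp
next
  case (Suc j)
  show ?case
  proof (cases "i = Suc j")
    case True thus ?thesis by simp
  next
    case False
    hence ih: "hr i + \<sigma> i * (real j - real i) \<le> hr j" using Suc by auto
    have "\<sigma> i \<le> \<sigma> j" using Suc False by (intro sigma_mono) auto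
    hence "hr i + \<sigma> i * (real (Suc j) - real i) \<le> hr j + \<sigma> j" using ih by (simp add: algebra_simps)
    thus ?thesis unfolding \<sigma>_def by simp
  qed
qed

lemma hr_lower_left: assumes "j0 \<le> i" "i \<le> j" "0 < j" "j \<le> n"
  shows "hr j - \<sigma> (j - 1) * (real j - real i) \<le> hr i"
  using assms
proof (induction "j - i" arbitrary: i)
  case 0 thus ?case by simp
next
  case (Suc m)
  have ij: "i < j" using Suc by simp
  show ?case
  proof (cases "Suc i = j")
    case True thus ?thesis unfolding \<sigma>_def using Suc by (auto simp: algebra_simps)
  next
    case False
    have ih: "hr j - \<sigma> (j - 1) * (real j - real (Suc i)) \<le> hr (Suc i)"
      using Suc(1)[of "Suc i"] Suc False by auto
    have "\<sigma> i \<le> \<sigma> (j - 1)" using Suc ij by (intro sigma_mono) auto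
    thus ?thesis using ih unfolding \<sigma>_def by (simp add: algebra_simps)
  qed
qed

end


context nfq begin

definition vtx :: "nat \<Rightarrow> bool" where
  "vtx v \<longleftrightarrow> j0 \<le> v \<and> v \<le> n \<and> (v = j0 \<or> v = n \<or> \<sigma> (v - 1) < \<sigma> v)"

lemma support_margin:
  assumes v: "vtx v" and m: "0 \<le> m"
    and sl: "v = j0 \<or> \<sigma> (v - 1) + m \<le> s" and sr: "v = n \<or> s + m \<le> \<sigma> v"
    and k: "k \<le> n" "k \<noteq> v"
  shows "ereal (hr v + s * (real k - real v) + m) \<le> H k"
proof -
  consider "k < j0" | "j0 \<le> k" "v < k" | "j0 \<le> k" "k < v" using k by linarith
  thus ?thesis
  proof cases
    case 1 thus ?thesis using H_inf by simp
  next
    case 2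
    have vn: "v < n" using 2 k by simp
    hence sv: "s + m \<le> \<sigma> v" using sr by simp
    have low: "hr v + \<sigma> v * (real k - real v) \<le> hr k"
      using v vn 2 k unfolding vtx_def by (intro hr_lower_right) auto
    have d1: "1 \<le> real k - real v" using 2 by simp
    have "s * (real k - real v) + m \<le> s * (real k - real v) + m * (real k - real v)"
      using m d1 mult_left_mono[OF d1 m] by simp
    also have "\<dots> = (s + m) * (real k - real v)" by (simp add: algebra_simps)
    also have "\<dots> \<le> \<sigma> v * (real k - real v)" using sv d1 by (intro mult_right_mono) auto
    finally have "hr v + s * (real k - real v) + m \<le> hr k" using low by simp
    thus ?thesis using H_hr[of k] 2 k by simp
  next
    case 3
    have vj: "v \<noteq> j0" using 3 by simp
    hence sv: "\<sigma> (v - 1) + m \<le> s" using sl by simp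
    have low: "hr v - \<sigma> (v - 1) * (real v - real k) \<le> hr k"
      using v 3 unfolding vtx_def by (intro hr_lower_left) auto
    have d1: "1 \<le> real v - real k" using 3 by simp
    have "(\<sigma> (v - 1) + m) * (real v - real k) \<le> s * (real v - real k)"
      using sv d1 by (intro mult_right_mono) auto
    moreover have "m \<le> m * (real v - real k)" using mult_left_mono[OF d1 m] by simp
    ultimately have "hr v + s * (real k - real v) + m \<le> hr v - \<sigma> (v - 1) * (real v - real k)"
      by (simp add: algebra_simps)
    thus ?thesis using low H_hr[of k] 3 k by simp
  qed
qed

lemma support:
  assumes v: "vtx v"
    and sl: "v = j0 \<or> \<sigma> (v - 1) \<le> s" and sr: "v = n \<or> s \<le> \<sigma> v"
    and k: "k \<le> n"
  shows "ereal (hr v + s * (real k - real v)) \<le> H k"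
proof (cases "k = v")
  case True thus ?thesis using v H_hr[of v] unfolding vtx_def by simp
next
  case False thus ?thesis using support_margin[OF v order_refl, of s k] sl sr k by simp
qed

lemma affine_below_val:
  assumes "\<And>k. k \<le> n \<Longrightarrow> ereal (c + s * real k) \<le> val (coeff Q k)"
  shows "ereal (c + s * x) \<le> newton_fun val Q x"
proof -
  have "(\<lambda>x. ereal (c + s * x)) x \<le> newton_fun val Q x"
  proof (rule nf_upper)
    show "convex_ereal_on {0..real (degree Q)} (\<lambda>x. ereal (c + s * x))" by (rule affine_convex_ereal)
    fix i assume "i \<le> degree Q"
    thus "ereal (c + s * real i) \<le> val (coeff Q i)" using assms(1)[of i] degQ by auto
  qed
  thus ?thesis by simp
qed

lemma affine_below:
  assumes "\<And>k. k \<le> n \<Longrightarrow> ereal (c + s * real k) \<le> H k" "0 \<le> x" "x \<le> real n"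
  shows "ereal (c + s * x) \<le> newton_fun val Q x"
proof -
  have "(\<lambda>x. ereal (c + s * x)) x \<le> newton_fun val Q x"
  proof (rule nf_upper)
    show "convex_ereal_on {0..real (degree Q)} (\<lambda>x. ereal (c + s * x))" by (rule affine_convex_ereal)
    fix i assume "i \<le> degree Q"
    thus "ereal (c + s * real i) \<le> val (coeff Q i)" using assms(1)[of i] H_le[of i] degQ by auto
  qed
  thus ?thesis by simp
qed

lemma exists_slopes: assumes "vtx v"
  shows "\<exists>s m. 0 < m \<and> (v = j0 \<or> \<sigma> (v - 1) + m \<le> s) \<and> (v = n \<or> s + m \<le> \<sigma> v)"
proof (cases "v = j0")
  case True
  show ?thesis
  proof (cases "v = n")
    case True thus ?thesis using \<open>v = j0\<close> by - (rule exI[of _ 0], rule exI[of _ 1], auto)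
  next
    case False thus ?thesis using True by - (rule exI[of _ "\<sigma> v - 1"], rule exI[of _ 1], auto)
  qed
next
  case False
  show ?thesis
  proof (cases "v = n")
    case True thus ?thesis using False by - (rule exI[of _ "\<sigma> (v - 1) + 1"], rule exI[of _ 1], auto)
  next
    case F2: False
    hence lt: "\<sigma> (v - 1) < \<sigma> v" using assms False unfolding vtx_def by auto
    show ?thesis using F2 False lt
      by - (rule exI[of _ "(\<sigma> (v - 1) + \<sigma> v) / 2"], rule exI[of _ "(\<sigma> v - \<sigma> (v - 1)) / 2"], auto simp: field_simps)
  qed
qed

lemma vtx_val: assumes v: "vtx v" shows "val (coeff Q v) = ereal (hr v)"
proof (rule ccontr)
  assume ne: "val (coeff Q v) \<noteq> ereal (hr v)"
  have vn: "v \<le> n" "j0 \<le> v" using v unfolding vtx_def by auto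
  have "ereal (hr v) \<le> val (coeff Q v)" using hr_le_val vn by simp
  hence lt: "ereal (hr v) < val (coeff Q v)" using ne by simp
  then obtain z where z: "ereal (hr v) < ereal z" "ereal z < val (coeff Q v)"
    using ereal_dense2 by blast
  obtain s m where sm: "0 < m" "v = j0 \<or> \<sigma> (v - 1) + m \<le> s" "v = n \<or> s + m \<le> \<sigma> v"
    using exists_slopes[OF v] by blast
  define m0 where "m0 = min m (z - hr v)"
  have m0: "0 < m0" "m0 \<le> m" "m0 \<le> z - hr v" using sm z unfolding m0_def by auto
  have sl: "v = j0 \<or> \<sigma> (v - 1) + m0 \<le> s" "v = n \<or> s + m0 \<le> \<sigma> v" using sm m0 by auto
  have all: "ereal ((hr v - s * real v + m0) + s * real k) \<le> val (coeff Q k)" if k: "k \<le> n" for k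
  proof (cases "k = v")
    case True
    have "ereal ((hr v - s * real v + m0) + s * real k) \<le> ereal z" using True m0 by simp
    also have "\<dots> \<le> val (coeff Q v)" using z by simp
    finally show ?thesis using True by simp
  next
    case False
    hence "ereal ((hr v - s * real v + m0) + s * real k) \<le> H k"
      using support_margin[OF v _ sl, of k] m0 k by (simp add: algebra_simps)
    thus ?thesis using H_le[OF k] by simp
  qed
  have "ereal ((hr v - s * real v + m0) + s * real v) \<le> newton_fun val Q (real v)"
    by (rule affine_below_val[OF all])
  hence "ereal (hr v + m0) \<le> ereal (hr v)" using H_hr[of v] vn unfolding H_def by simp
  thus False using m0 by simp
qed

end


context nfq begin

lemma vtx_extreme: assumes v: "vtx v"
  shows "(real v, hr v) extreme_point_of newton_polygon val Q"
proof -
  obtain s m where sm: "0 < m" "v = j0 \<or> \<sigma> (v - 1) + m \<le> s" "v = n \<or> s + m \<le> \<sigma> v"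
    using exists_slopes[OF v] by blast
  have vn: "v \<le> n" "j0 \<le> v" using v unfolding vtx_def by auto
  have sup: "ereal (hr v + s' * (x - real v)) \<le> newton_fun val Q x"
    if s': "s' = s - m \<or> s' = s + m" and x: "0 \<le> x" "x \<le> real n" for s' x
  proof -
    have c: "v = j0 \<or> \<sigma> (v - 1) \<le> s'" "v = n \<or> s' \<le> \<sigma> v" using sm s' by auto
    have "ereal ((hr v - s' * real v) + s' * x) \<le> newton_fun val Q x"
      using support[OF v c] x by (intro affine_below) (auto simp: algebra_simps)
    thus ?thesis by (simp add: algebra_simps)
  qed
  have key: "x = real v \<and> y = hr v"
    if xy: "(x, y) \<in> newton_polygon val Q" and D: "\<And>s'. (1 - u) * (y - hr v - s' * (x - real v)) + u * (y' - hr v - s' * (x' - real v)) = 0"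
      and xy': "(x', y') \<in> newton_polygon val Q" and u: "0 < u" "u < 1" for x y x' y' u
  proof -
    have X: "0 \<le> x" "x \<le> real n" "newton_fun val Q x \<le> ereal y"
      using xy unfolding newton_polygon_def epigraph_on_def degQ by auto
    have X': "0 \<le> x'" "x' \<le> real n" "newton_fun val Q x' \<le> ereal y'"
      using xy' unfolding newton_polygon_def epigraph_on_def degQ by auto
    have zero: "y - hr v - s' * (x - real v) = 0" if s': "s' = s - m \<or> s' = s + m" for s'
    proof -
      have a: "0 \<le> y - hr v - s' * (x - real v)"
        using order_trans[OF sup[OF s' X(1,2)] X(3)] by simp
      have b: "0 \<le> y' - hr v - s' * (x' - real v)"
        using order_trans[OF sup[OF s' X'(1,2)] X'(3)] by simp
      have a': "0 \<le> (1 - u) * (y - hr v - s' * (x - real v))" using a u by simp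
      have b': "0 \<le> u * (y' - hr v - s' * (x' - real v))" using b u by simp
      have "(1 - u) * (y - hr v - s' * (x - real v)) = 0" using D[of s'] a' b' by linarith
      thus ?thesis using u by simp
    qed
    have "(s + m) * (x - real v) = (s - m) * (x - real v)" using zero[of "s-m"] zero[of "s+m"] by simp
    hence "x = real v" using sm by (simp add: algebra_simps)
    thus ?thesis using zero[of "s-m"] by simp
  qed
  show ?thesis unfolding extreme_point_of_def
  proof (intro conjI ballI)
    show "(real v, hr v) \<in> newton_polygon val Q"
      unfolding newton_polygon_def epigraph_on_def using vn H_hr[of v] degQ unfolding H_def by auto
  next
    fix a b assume a: "a \<in> newton_polygon val Q" and b: "b \<in> newton_polygon val Q"
    show "(real v, hr v) \<notin> open_segment a b"
    proof
      assume "(real v, hr v) \<in> open_segment a b"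
      then obtain u where u: "a \<noteq> b" "0 < u" "u < 1" "(real v, hr v) = (1 - u) *\<^sub>R a + u *\<^sub>R b"
        unfolding in_segment by blast
      obtain x y where axy: "a = (x, y)" by (cases a)
      obtain x' y' where bxy: "b = (x', y')" by (cases b)
      have e1: "real v = (1 - u) * x + u * x'" and e2: "hr v = (1 - u) * y + u * y'"
        using u(4) unfolding axy bxy by auto
      have D: "(1 - u) * (y - hr v - s' * (x - real v)) + u * (y' - hr v - s' * (x' - real v)) = 0" for s'
      proof -
        have "(1 - u) * (y - hr v - s' * (x - real v)) + u * (y' - hr v - s' * (x' - real v))
          = ((1 - u) * y + u * y') - hr v - s' * (((1 - u) * x + u * x') - real v)"
          by (simp add: algebra_simps)
        thus ?thesis using e1 e2 by simp
      qed
      have X1: "x = real v \<and> y = hr v" using key[OF a[unfolded axy] D b[unfolded bxy] u(2) u(3)] .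
      have D2: "(1 - (1 - u)) * (y' - hr v - s' * (x' - real v)) + (1 - u) * (y - hr v - s' * (x - real v)) = 0" for s'
        using D[of s'] by (simp add: algebra_simps)
      have X2: "x' = real v \<and> y' = hr v"
        using key[OF b[unfolded bxy] D2 a[unfolded axy]] u by simp
      show False using X1 X2 u(1) unfolding axy bxy by simp
    qed
  qed
qed

lemma sigma_const:
  assumes "j0 \<le> u" "\<And>k. u < k \<Longrightarrow> k < w \<Longrightarrow> \<not> vtx k" "w \<le> n"
  shows "u + j < w \<Longrightarrow> \<sigma> (u + j) = \<sigma> u"
proof (induction j)
  case 0 thus ?case by simp
next
  case (Suc j)
  have ih: "\<sigma> (u + j) = \<sigma> u" using Suc by simp
  have k: "\<not> vtx (Suc (u + j))" using assms(2)[of "Suc (u + j)"] Suc by simp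
  have le: "\<sigma> (u + j) \<le> \<sigma> (Suc (u + j))" using Suc assms by (intro sigma_step) auto
  have "\<not> \<sigma> (u + j) < \<sigma> (Suc (u + j))" using k Suc assms unfolding vtx_def by auto
  thus ?case using le ih by simp
qed

lemma hr_lin:
  assumes "j0 \<le> u" "\<And>k. u < k \<Longrightarrow> k < w \<Longrightarrow> \<not> vtx k" "w \<le> n"
  shows "u + j \<le> w \<Longrightarrow> hr (u + j) = hr u + \<sigma> u * real j"
proof (induction j)
  case 0 thus ?case by simp
next
  case (Suc j)
  have "\<sigma> (u + j) = \<sigma> u" using sigma_const[OF assms, of j] Suc by simp
  thus ?case using Suc unfolding \<sigma>_def by (simp add: algebra_simps)
qed

lemma interp: assumes i: "j0 \<le> i" "i \<le> n"
  shows "\<exists>u w t. vtx u \<and> vtx w \<and> 0 \<le> t \<and> t \<le> 1 \<and> real i = t * real u + (1 - t) * real w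
           \<and> hr i = t * hr u + (1 - t) * hr w"
proof (cases "vtx i")
  case True thus ?thesis by (intro exI[of _ i] exI[of _ i] exI[of _ 1]) auto
next
  case nv: False
  define U where "U = {k. vtx k \<and> k \<le> i}"
  define W where "W = {k. vtx k \<and> i \<le> k \<and> k \<le> n}"
  have j0U: "j0 \<in> U" unfolding U_def vtx_def using i j0_le by auto
  have nW: "n \<in> W" unfolding W_def vtx_def using i j0_le by auto
  have fU: "finite U" unfolding U_def by simp
  have fW: "finite W" unfolding W_def by simp
  define u where "u = Max U"
  define w where "w = Min W"
  have uU: "u \<in> U" unfolding u_def using fU j0U by (intro Max_in) auto
  have wW: "w \<in> W" unfolding w_def using fW nW by (intro Min_in) auto
  have vu: "vtx u" "u \<le> i" using uU unfolding U_def by auto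
  have vw: "vtx w" "i \<le> w" "w \<le> n" using wW unfolding W_def by auto
  have ui: "u < i" using vu nv by (cases "u = i") auto
  have iw: "i < w" using vw nv by (cases "w = i") auto
  have nov: "\<not> vtx k" if "u < k" "k < w" for k
  proof
    assume vk: "vtx k"
    show False
    proof (cases "k \<le> i")
      case True
      hence "k \<in> U" using vk unfolding U_def by simp
      hence "k \<le> u" unfolding u_def using fU by simp
      thus False using that by simp
    next
      case False
      hence "k \<in> W" using vk unfolding W_def vtx_def by simp
      hence "w \<le> k" unfolding w_def using fW by simp
      thus False using that by simp
    qed
  qed
  have j0u: "j0 \<le> u" using vu unfolding vtx_def by simp
  have hi: "hr i = hr u + \<sigma> u * real (i - u)"
    using hr_lin[OF j0u nov vw(3), of "i - u"] ui iw by simp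
  have hw: "hr w = hr u + \<sigma> u * real (w - u)"
    using hr_lin[OF j0u nov vw(3), of "w - u"] ui iw by simp
  define t where "t = (real w - real i) / (real w - real u)"
  have nz: "real w - real u \<noteq> 0" using ui iw by simp
  have t: "0 \<le> t" "t \<le> 1" unfolding t_def using ui iw by (auto simp: field_simps)
  have omt: "1 - t = (real i - real u) / (real w - real u)" unfolding t_def using nz by (simp add: field_simps)
  have e1: "real i = t * real u + (1 - t) * real w"
  proof -
    have "t * real u + (1 - t) * real w = real u + (1 - t) * (real w - real u)" by (simp add: algebra_simps)
    also have "\<dots> = real i" unfolding omt using nz by simp
    finally show ?thesis by simp
  qed
  have e2: "hr i = t * hr u + (1 - t) * hr w"
  proof -
    have hw': "hr w = hr u + \<sigma> u * (real w - real u)" using hw ui iw by (simp add: of_nat_diff)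
    have "t * hr u + (1 - t) * hr w = hr u + (1 - t) * (\<sigma> u * (real w - real u))"
      unfolding hw' by (simp add: algebra_simps)
    also have "\<dots> = hr u + \<sigma> u * (real i - real u)" unfolding omt using nz by simp
    finally show ?thesis using hi ui by (simp add: of_nat_diff)
  qed
  show ?thesis using vu vw t e1 e2 by blast
qed

end


context dvl begin

definition bnd :: "nat \<Rightarrow> (nat \<Rightarrow> real) \<Rightarrow> 'k poly \<Rightarrow> real \<Rightarrow> bool" where
  "bnd j0 \<psi> S t \<longleftrightarrow> (\<forall>k<j0. coeff S k = 0) \<and> (\<forall>k. ereal (\<psi> k + t) \<le> val (coeff S k))"
definition sbnd :: "nat \<Rightarrow> (nat \<Rightarrow> real) \<Rightarrow> 'k poly \<Rightarrow> real \<Rightarrow> bool" where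
  "sbnd j0 \<psi> S t \<longleftrightarrow> (\<forall>k<j0. coeff S k = 0) \<and> (\<forall>k. ereal (\<psi> k + t) < val (coeff S k))"

lemma red_deg:
  fixes S Aa :: "'k poly"
  assumes A: "degree Aa = d" "coeff Aa d = 1" and k: "degree S = k" "d \<le> k" "0 < d"
  shows "degree (S - monom (coeff S k) (k - d) * Aa) < k"
proof -
  have "degree (S - monom (coeff S k) (k - d) * Aa) \<le> k - 1"
  proof (rule degree_le, intro allI impI)
    fix m assume m: "k - 1 < m"
    show "coeff (S - monom (coeff S k) (k - d) * Aa) m = 0"
    proof (cases "m = k")
      case True
      have "k - (k - d) = d" using k by simp
      thus ?thesis using A k True by (simp add: coeff_monom_mult)
    next
      case False
      hence mk: "k < m" using m k by simp
      have "coeff S m = 0" using mk k by (simp add: coeff_eq_0)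
      moreover have "coeff Aa (m - (k - d)) = 0" using mk k A by (intro coeff_eq_0) auto
      ultimately show ?thesis by (simp add: coeff_monom_mult)
    qed
  qed
  thus ?thesis using k by simp
qed

lemma red_bnd:
  fixes S Aa :: "'k poly"
  assumes A: "degree Aa = d" "coeff Aa d = 1" "bnd j0 \<psi> Aa (- \<psi> d)"
    and Hpsi: "\<And>i j. j0 \<le> i \<Longrightarrow> \<psi> (i + j) \<le> \<psi> i + l0 * real j"
    and Hlin: "\<And>k. d \<le> k \<Longrightarrow> \<psi> k = \<psi> d + l0 * (real k - real d)"
    and k: "d \<le> k"
  shows "bnd j0 \<psi> S t \<Longrightarrow> bnd j0 \<psi> (S - monom (coeff S k) (k - d) * Aa) t"
    and "sbnd j0 \<psi> S t \<Longrightarrow> sbnd j0 \<psi> (S - monom (coeff S k) (k - d) * Aa) t"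
proof -
  have Az: "coeff Aa j = 0" if "j < j0" for j using A that unfolding bnd_def by auto
  have Ab: "ereal (\<psi> j - \<psi> d) \<le> val (coeff Aa j)" for j using A unfolding bnd_def by auto
  have co: "coeff (S - monom (coeff S k) (k - d) * Aa) m =
     coeff S m - (if m < k - d then 0 else coeff S k * coeff Aa (m - (k - d)))" for m
    by (simp add: coeff_monom_mult)
  have zero: "coeff (S - monom (coeff S k) (k - d) * Aa) m = 0" if "\<forall>k<j0. coeff S k = 0" "m < j0" for m
    using that Az[of "m - (k - d)"] unfolding co by auto
  have psim: "\<psi> m \<le> \<psi> k + (\<psi> (m - (k - d)) - \<psi> d)" if "\<not> m < k - d" "j0 \<le> m - (k - d)" for m
  proof -
    have "\<psi> m = \<psi> ((m - (k - d)) + (k - d))" using that by simp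
    also have "\<dots> \<le> \<psi> (m - (k - d)) + l0 * real (k - d)" using Hpsi that by blast
    also have "\<dots> = \<psi> k + (\<psi> (m - (k - d)) - \<psi> d)" using Hlin[OF k] k by (simp add: of_nat_diff)
    finally show ?thesis .
  qed
  {
    assume b: "bnd j0 \<psi> S t"
    show "bnd j0 \<psi> (S - monom (coeff S k) (k - d) * Aa) t"
      unfolding bnd_def
    proof (intro conjI allI impI)
      fix m assume "m < j0" thus "coeff (S - monom (coeff S k) (k - d) * Aa) m = 0"
        using zero b unfolding bnd_def by blast
    next
      fix m
      have s1: "ereal (\<psi> m + t) \<le> val (coeff S m)" using b unfolding bnd_def by auto
      have s2: "ereal (\<psi> m + t) \<le> val (if m < k - d then 0 else coeff S k * coeff Aa (m - (k - d)))"
      proof (cases "m < k - d")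
        case False
        show ?thesis
        proof (cases "m - (k - d) < j0")
          case True thus ?thesis using False Az by simp
        next
          case F2: False
          have c1: "ereal ((\<psi> k + t) + (\<psi> (m - (k - d)) - \<psi> d)) \<le> val (coeff S k * coeff Aa (m - (k - d)))"
            using b Ab unfolding bnd_def by (intro lb_mult) auto
          have c2: "ereal (\<psi> m + t) \<le> ereal ((\<psi> k + t) + (\<psi> (m - (k - d)) - \<psi> d))" using psim[OF False] F2 by simp
          show ?thesis using order_trans[OF c2 c1] False by simp
        qed
      qed simp
      show "ereal (\<psi> m + t) \<le> val (coeff (S - monom (coeff S k) (k - d) * Aa) m)"
        unfolding co using s1 s2 by (rule lb_diff)
    qed
  }
  {
    assume b: "sbnd j0 \<psi> S t"
    show "sbnd j0 \<psi> (S - monom (coeff S k) (k - d) * Aa) t"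
      unfolding sbnd_def
    proof (intro conjI allI impI)
      fix m assume "m < j0" thus "coeff (S - monom (coeff S k) (k - d) * Aa) m = 0"
        using zero b unfolding sbnd_def by blast
    next
      fix m
      have s1: "ereal (\<psi> m + t) < val (coeff S m)" using b unfolding sbnd_def by auto
      have s2: "ereal (\<psi> m + t) < val (if m < k - d then 0 else coeff S k * coeff Aa (m - (k - d)))"
      proof (cases "m < k - d")
        case False
        show ?thesis
        proof (cases "m - (k - d) < j0")
          case True thus ?thesis using False Az by simp
        next
          case F2: False
          have c1: "ereal ((\<psi> k + t) + (\<psi> (m - (k - d)) - \<psi> d)) < val (coeff S k * coeff Aa (m - (k - d)))"
            using b Ab unfolding sbnd_def by (intro slb_mult) auto
          have c2: "ereal (\<psi> m + t) \<le> ereal ((\<psi> k + t) + (\<psi> (m - (k - d)) - \<psi> d))" using psim[OF False] F2 by simp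
          show ?thesis using order_le_less_trans[OF c2 c1] False by simp
        qed
      qed simp
      have "ereal (\<psi> m + t) < val (coeff S m + - (if m < k - d then 0 else coeff S k * coeff Aa (m - (k - d))))"
        using s1 s2 by (intro slb_add) auto
      thus "ereal (\<psi> m + t) < val (coeff (S - monom (coeff S k) (k - d) * Aa) m)"
        unfolding co by simp
    qed
  }
qed

lemma red_mod:
  fixes S Aa :: "'k poly"
  assumes A: "degree Aa = d" "coeff Aa d = 1" "bnd j0 \<psi> Aa (- \<psi> d)" "0 < d"
    and Hpsi: "\<And>i j. j0 \<le> i \<Longrightarrow> \<psi> (i + j) \<le> \<psi> i + l0 * real j"
    and Hlin: "\<And>k. d \<le> k \<Longrightarrow> \<psi> k = \<psi> d + l0 * (real k - real d)"
  shows "(bnd j0 \<psi> S t \<longrightarrow> bnd j0 \<psi> (S mod Aa) t) \<and> (sbnd j0 \<psi> S t \<longrightarrow> sbnd j0 \<psi> (S mod Aa) t)"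
proof (induction "degree S" arbitrary: S rule: less_induct)
  case less
  show ?case
  proof (cases "degree S < d")
    case True
    hence "S mod Aa = S" using A by (intro mod_poly_less) auto
    thus ?thesis by simp
  next
    case False
    define k where "k = degree S"
    define S' where "S' = S - monom (coeff S k) (k - d) * Aa"
    have dk: "d \<le> k" using False k_def by simp
    have deg: "degree S' < degree S" unfolding S'_def k_def using A dk k_def by (intro red_deg) auto
    have "S = S' + monom (coeff S k) (k - d) * Aa" unfolding S'_def by simp
    hence md: "S mod Aa = S' mod Aa" by (metis mod_mult_self1)
    have ih: "(bnd j0 \<psi> S' t \<longrightarrow> bnd j0 \<psi> (S' mod Aa) t) \<and> (sbnd j0 \<psi> S' t \<longrightarrow> sbnd j0 \<psi> (S' mod Aa) t)"
      using less deg by blast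
    show ?thesis unfolding md using ih red_bnd[OF A(1-3) Hpsi Hlin dk, of S t] unfolding S'_def by blast
  qed
qed

end


context dvl begin

lemma core2:
  fixes E B dP Aa :: "'k poly"
  assumes A: "degree Aa = d" "coeff Aa d = 1" "bnd j0 \<psi> Aa (- \<psi> d)" "0 < d"
    and Hpsi: "\<And>i j. j0 \<le> i \<Longrightarrow> \<psi> (i + j) \<le> \<psi> i + l0 * real j"
    and Hlin: "\<And>k. d \<le> k \<Longrightarrow> \<psi> k = \<psi> d + l0 * (real k - real d)"
    and E: "degree E < d" "\<And>k. k < j0 \<Longrightarrow> coeff E k = 0"
    and B: "coeff B 0 \<noteq> 0" "val (coeff B 0) = ereal \<beta>"
           "\<And>j. 1 \<le> j \<Longrightarrow> ereal (\<beta> + l0 * real j) < val (coeff B j)"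
    and eq: "(E * B) mod Aa = dP mod Aa" and dP: "bnd j0 \<psi> dP \<delta>"
  shows "ereal (\<psi> i + \<delta> - \<beta>) \<le> val (coeff E i)"
proof (cases "E = 0")
  case True thus ?thesis by simp
next
  case Enz: False
  define I where "I = {i. i \<le> degree E \<and> coeff E i \<noteq> 0}"
  define f where "f i = real_of_ereal (val (coeff E i)) - \<psi> i" for i
  have fI: "finite I" unfolding I_def by simp
  have neI: "I \<noteq> {}" unfolding I_def using Enz leading_coeff_0_iff by blast
  define t0 where "t0 = Min (f ` I)"
  have "t0 \<in> f ` I" unfolding t0_def using fI neI by (intro Min_in) auto
  then obtain i0 where i0: "i0 \<in> I" "f i0 = t0" by auto
  have vE: "val (coeff E i) = ereal (f i + \<psi> i)" if nz: "coeff E i \<noteq> 0" for i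
  proof -
    obtain r where "val (coeff E i) = ereal r" using val_fin nz by blast
    thus ?thesis unfolding f_def by simp
  qed
  have bndE: "ereal (\<psi> i + t0) \<le> val (coeff E i)" for i
  proof (cases "coeff E i = 0")
    case False
    hence "i \<in> I" unfolding I_def using le_degree by blast
    hence "t0 \<le> f i" unfolding t0_def using fI by simp
    thus ?thesis using vE[OF False] by simp
  qed simp
  define b0 where "b0 = coeff B 0"
  define R where "R = E * (B - [:b0:])"
  have EB: "E * B = smult b0 E + R" unfolding R_def by (simp add: algebra_simps)
  have sR: "sbnd j0 \<psi> R (t0 + \<beta>)" unfolding sbnd_def
  proof (intro conjI allI impI)
    fix k assume k: "k < j0"
    show "coeff R k = 0" unfolding R_def coeff_mult using E(2) k by (intro sum.neutral) auto
  next
    fix k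
    show "ereal (\<psi> k + (t0 + \<beta>)) < val (coeff R k)" unfolding R_def coeff_mult
    proof (rule slb_sum)
      fix i assume i: "i \<in> {..k}"
      show "ereal (\<psi> k + (t0 + \<beta>)) < val (coeff E i * coeff (B - [:b0:]) (k - i))"
      proof (cases "k - i = 0 \<or> coeff E i = 0")
        case True thus ?thesis unfolding b0_def by (auto simp: coeff_pCons split: nat.splits)
      next
        case False
        hence j1: "1 \<le> k - i" and ei: "coeff E i \<noteq> 0" by auto
        have ij0: "j0 \<le> i" using E(2) ei by (meson not_less)
        have cB: "coeff (B - [:b0:]) (k - i) = coeff B (k - i)" using j1
          by (cases "k - i") auto
        have "ereal ((\<beta> + l0 * real (k - i)) + (\<psi> i + t0)) < val (coeff B (k - i) * coeff E i)"
          using B(3)[OF j1] bndE by (intro slb_mult) auto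
        moreover have "\<psi> k \<le> \<psi> i + l0 * real (k - i)" using Hpsi[OF ij0, of "k - i"] i by simp
        hence "ereal (\<psi> k + (t0 + \<beta>)) \<le> ereal ((\<beta> + l0 * real (k - i)) + (\<psi> i + t0))" by simp
        ultimately have "ereal (\<psi> k + (t0 + \<beta>)) < val (coeff B (k - i) * coeff E i)"
          by (rule order_le_less_trans[rotated])
        thus ?thesis unfolding cB by (simp add: mult.commute)
      qed
    qed simp
  qed
  have sRm: "sbnd j0 \<psi> (R mod Aa) (t0 + \<beta>)" using red_mod[OF A Hpsi Hlin, of R "t0 + \<beta>"] sR by blast
  have dPm: "bnd j0 \<psi> (dP mod Aa) \<delta>" using red_mod[OF A Hpsi Hlin, of dP \<delta>] dP by blast
  have "smult b0 E mod Aa = smult b0 E" using E A by (intro mod_poly_less) (auto intro: le_less_trans[OF degree_smult_le])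
  hence EBm: "(E * B) mod Aa = smult b0 E + R mod Aa" unfolding EB poly_mod_add_left by simp
  have ei0: "coeff E i0 \<noteq> 0" using i0 unfolding I_def by simp
  have v1: "val (b0 * coeff E i0) = ereal (\<psi> i0 + t0 + \<beta>)"
    using vE[OF ei0] B(2) i0 unfolding b0_def by (simp add: val_mult algebra_simps)
  have v2: "val (b0 * coeff E i0) < val (coeff (R mod Aa) i0)"
    using sRm unfolding sbnd_def v1 by (simp add: algebra_simps)
  have dPeq: "dP mod Aa = smult b0 E + R mod Aa" using eq EBm by simp
  have "val (coeff (dP mod Aa) i0) = val (b0 * coeff E i0 + coeff (R mod Aa) i0)"
    unfolding dPeq by simp
  also have "\<dots> = ereal (\<psi> i0 + t0 + \<beta>)" using val_strict[OF v2] v1 by simp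
  finally have c1: "val (coeff (dP mod Aa) i0) = ereal (\<psi> i0 + t0 + \<beta>)" .
  have "ereal (\<psi> i0 + \<delta>) \<le> val (coeff (dP mod Aa) i0)" using dPm unfolding bnd_def by blast
  hence "ereal (\<psi> i0 + \<delta>) \<le> ereal (\<psi> i0 + t0 + \<beta>)" unfolding c1 .
  hence "\<delta> - \<beta> \<le> t0" by simp
  hence "ereal (\<psi> i + \<delta> - \<beta>) \<le> ereal (\<psi> i + t0)" by simp
  thus ?thesis using bndE[of i] by (rule order_trans)
qed

lemma hi_lemma:
  fixes A B :: "'k poly"
  assumes A: "degree A = d" "coeff A d = 1" "\<And>i. ereal (l * (real i - real d)) \<le> val (coeff A i)"
    and P: "\<And>k. ereal (p + l * real k) \<le> val (coeff (A * B) k)"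
  shows "ereal (p + l * (real j + real d)) \<le> val (coeff B j)"
proof (rule ccontr)
  assume fail: "\<not> ereal (p + l * (real j + real d)) \<le> val (coeff B j)"
  hence bj: "coeff B j \<noteq> 0" by auto
  define J where "J = {j. j \<le> degree B \<and> coeff B j \<noteq> 0}"
  define f where "f j = real_of_ereal (val (coeff B j)) - l * real j" for j
  have vB: "val (coeff B i) = ereal (f i + l * real i)" if nz: "coeff B i \<noteq> 0" for i
  proof -
    obtain r where "val (coeff B i) = ereal r" using val_fin nz by blast
    thus ?thesis unfolding f_def by simp
  qed
  have fJ: "finite J" unfolding J_def by simp
  have jJ: "j \<in> J" unfolding J_def using bj le_degree by blast
  define m where "m = Min (f ` J)"
  have mJ: "m \<in> f ` J" unfolding m_def using fJ jJ by (intro Min_in) auto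
  have mle: "m \<le> f i" if "i \<in> J" for i unfolding m_def using fJ that by simp
  have mlt: "m < p + l * real d"
  proof -
    have "f j < p + l * real d" using fail vB[OF bj] by (simp add: algebra_simps)
    thus ?thesis using mle[OF jJ] by simp
  qed
  define Js where "Js = {i \<in> J. f i = m}"
  have fJs: "finite Js" unfolding Js_def using fJ by simp
  have neJs: "Js \<noteq> {}" unfolding Js_def using mJ by auto
  define js where "js = Max Js"
  have jsJs: "js \<in> Js" unfolding js_def using fJs neJs by (intro Max_in) auto
  have js: "coeff B js \<noteq> 0" "f js = m" using jsJs unfolding Js_def J_def by auto
  define k where "k = d + js"
  have ck: "coeff (A * B) k = (\<Sum>i\<le>k. coeff A i * coeff B (k - i))" by (rule coeff_mult)
  have "val (coeff (A * B) k) = val (coeff A d * coeff B (k - d))"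
    unfolding ck
  proof (rule val_sum_strict)
    show "d \<in> {..k}" unfolding k_def by simp
    show "coeff A d * coeff B (k - d) \<noteq> 0" using A js unfolding k_def by simp
    fix i assume i: "i \<in> {..k} - {d}"
    have lhs: "val (coeff A d * coeff B (k - d)) = ereal (m + l * real js)"
      using A vB[OF js(1)] js unfolding k_def by simp
    show "val (coeff A d * coeff B (k - d)) < val (coeff A i * coeff B (k - i))"
    proof (cases "d < i")
      case True
      hence "coeff A i = 0" using A by (intro coeff_eq_0) auto
      thus ?thesis unfolding lhs by simp
    next
      case False
      hence id: "i < d" using i by auto
      show ?thesis
      proof (cases "coeff B (k - i) = 0")
        case True thus ?thesis unfolding lhs by simp
      next
        case bnz: False
        have kiJ: "k - i \<in> J" unfolding J_def using bnz le_degree by blast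
        have "js < k - i" unfolding k_def using id by simp
        hence "k - i \<notin> Js" using fJs unfolding js_def using Max_ge leD by blast
        hence "f (k - i) \<noteq> m" using kiJ unfolding Js_def by simp
        hence fgt: "m < f (k - i)" using mle[OF kiJ] by simp
        have "ereal ((m + l * real (k - i)) + l * (real i - real d)) < val (coeff B (k - i) * coeff A i)"
          using vB[OF bnz] fgt A(3)[of i] by (intro slb_mult) auto
        moreover have "(m + l * real (k - i)) + l * (real i - real d) = m + l * real js"
          unfolding k_def using id by (simp add: algebra_simps of_nat_diff)
        ultimately show ?thesis unfolding lhs by (simp add: mult.commute)
      qed
    qed
  qed simp
  also have "\<dots> = ereal (m + l * real js)" using A vB[OF js(1)] js unfolding k_def by simp
  finally have "ereal (p + l * real k) \<le> ereal (m + l * real js)" using P[of k] by simp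
  thus False using mlt unfolding k_def by (simp add: algebra_simps)
qed

end


context nfq begin

lemma np_mem: "(x, y) \<in> newton_polygon val Q \<longleftrightarrow> 0 \<le> x \<and> x \<le> real n \<and> newton_fun val Q x \<le> ereal y"
  unfolding newton_polygon_def epigraph_on_def degQ by simp

lemma ext_y: assumes e: "(real d, y) extreme_point_of newton_polygon val Q"
  shows "j0 \<le> d \<and> d \<le> n \<and> y = hr d"
proof -
  have m: "(real d, y) \<in> newton_polygon val Q" using e unfolding extreme_point_of_def by blast
  hence dn: "d \<le> n" and le: "H d \<le> ereal y" unfolding np_mem H_def by auto
  hence "H d \<noteq> \<infinity>" by auto
  hence jd: "j0 \<le> d" using j0_leI dn by blast
  have Hd: "H d = ereal (hr d)" using H_hr jd dn by blast
  have "y = hr d"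
  proof (rule ccontr)
    assume "y \<noteq> hr d"
    hence lt: "hr d < y" using le Hd by simp
    have a: "(real d, hr d) \<in> newton_polygon val Q" unfolding np_mem using Hd dn unfolding H_def by simp
    have b: "(real d, 2 * y - hr d) \<in> newton_polygon val Q" unfolding np_mem using Hd dn lt unfolding H_def by simp
    have "(real d, y) \<in> open_segment (real d, hr d) (real d, 2 * y - hr d)"
      unfolding in_segment using lt by (intro conjI exI[of _ "1/2"]) (auto simp: algebra_simps)
    thus False using e a b unfolding extreme_point_of_def by blast
  qed
  thus ?thesis using jd dn by simp
qed

lemma ext_strict: assumes e: "(real d, hr d) extreme_point_of newton_polygon val Q"
  and d: "j0 < d" "d < n"
  shows "\<sigma> (d - 1) < \<sigma> d"
proof -
  have le: "\<sigma> (d - 1) \<le> \<sigma> d" using d by (intro sigma_mono) auto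
  show ?thesis
  proof (rule ccontr)
    assume "\<not> ?thesis"
    hence eq: "\<sigma> (d - 1) = \<sigma> d" using le by simp
    have a: "(real (d - 1), hr (d - 1)) \<in> newton_polygon val Q"
      unfolding np_mem using H_hr[of "d - 1"] d unfolding H_def by auto
    have b: "(real (d + 1), hr (d + 1)) \<in> newton_polygon val Q"
      unfolding np_mem using H_hr[of "d + 1"] d unfolding H_def by auto
    have s1: "\<sigma> (d - 1) = hr d - hr (d - 1)" unfolding \<sigma>_def using d by simp
    have s2: "\<sigma> d = hr (d + 1) - hr d" unfolding \<sigma>_def by simp
    have "(real d, hr d) \<in> open_segment (real (d - 1), hr (d - 1)) (real (d + 1), hr (d + 1))"
      unfolding in_segment using d eq s1 s2
      by (intro conjI exI[of _ "1/2"]) (auto simp: field_simps of_nat_diff)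
    thus False using e a b unfolding extreme_point_of_def by blast
  qed
qed

end


context nfq begin

lemma below_via_vtx:
  assumes g: "convex_ereal_on {0..real n} g" and gv: "\<And>v. vtx v \<Longrightarrow> g (real v) \<le> ereal (hr v)"
    and i: "j0 \<le> i" "i \<le> n"
  shows "g (real i) \<le> ereal (hr i)"
proof -
  obtain u w t where uw: "vtx u" "vtx w" "0 \<le> t" "t \<le> 1" "real i = t * real u + (1 - t) * real w"
    "hr i = t * hr u + (1 - t) * hr w" using interp[OF i] by blast
  have mem: "real u \<in> {0..real n}" "real w \<in> {0..real n}" using uw unfolding vtx_def by auto
  have "g (real i) \<le> ereal t * g (real u) + ereal (1 - t) * g (real w)"
    using g mem uw unfolding convex_ereal_on_def by auto
  also have "\<dots> \<le> ereal t * ereal (hr u) + ereal (1 - t) * ereal (hr w)"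
    using uw gv by (intro add_mono ereal_mult_left_mono) auto
  also have "\<dots> = ereal (hr i)" using uw by simp
  finally show ?thesis .
qed

end



theorem proposition4p6:
  fixes val :: "'k::field \<Rightarrow> ereal"
    and Papp dP :: "'k poly"
    and phiP :: "real \<Rightarrow> ereal"
    and n d :: nat
  assumes dv: "discrete_valuation val"
    and cpl: "complete_valuation val"
    and Papp_monic: "lead_coeff Papp = 1"
    and deg: "degree Papp = n"
    and d_pos: "0 < d" and d_lt: "d < n"
    and extr: "\<exists>y. val (coeff Papp d) = ereal y \<and>
                    (real d, y) extreme_point_of newton_polygon val Papp"
    and low: "\<exists>j<d. coeff Papp j \<noteq> 0"
    and phiP_newton: "newton_function (n - 1) phiP"
    and nondeg1: "\<forall>x\<in>{0..real (n - 1)}. newton_fun val Papp x \<le> phiP x"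
    and nondeg2: "\<forall>x y. (x, y) extreme_point_of newton_polygon val Papp \<and> x \<le> real (n - 1)
                     \<longrightarrow> ereal y < phiP x"
    and delta_pos: "0 < (INF x \<in> {x\<in>{0..real (n - 1)}. phi_ext val Papp d x \<noteq> \<infinity>}.
                          phiP x - phi_ext val Papp d x)"
    and dP_deg: "degree dP \<le> n - 1"
    and dP_val: "\<forall>i\<le>n - 1. phiP (real i) \<le> val (coeff dP i)"
  shows "(\<forall>x\<in>{0..real n}. newton_fun val (Papp + dP) x = newton_fun val Papp x) \<and>
         (\<forall>A Aapp.
            lead_coeff A = 1 \<and> degree A = d \<and> A dvd Papp + dP \<and>
            (\<forall>x\<in>{0..real d}. newton_fun val A x =
                newton_fun val Papp x - newton_fun val Papp (real d)) \<and>
            lead_coeff Aapp = 1 \<and> degree Aapp = d \<and> Aapp dvd Papp \<and>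
            (\<forall>x\<in>{0..real d}. newton_fun val Aapp x =
                newton_fun val Papp x - newton_fun val Papp (real d))
            \<longrightarrow>
            (\<forall>i<d. phi_ext val Papp d (real i) - phi_ext val Papp d (real d)
                     + (INF x \<in> {x\<in>{0..real (n - 1)}. phi_ext val Papp d x \<noteq> \<infinity>}.
                          phiP x - phi_ext val Papp d x)
                   \<le> val (coeff (A - Aapp) i)))"
proof -
  interpret dvl val by (unfold_locales) (rule dv)
  have lcP: "coeff Papp n = 1" using Papp_monic deg by simp
  interpret PA: nfq val Papp n by unfold_locales (use deg lcP in auto)
  define P where "P = Papp + dP"
  have n2: "1 \<le> d" "d + 1 \<le> n" using d_pos d_lt by auto
  have cdP: "coeff dP k = 0" if "n - 1 < k" for k using dP_deg that by (intro coeff_eq_0) auto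
  have degP: "degree P = n" unfolding P_def using dP_deg deg d_lt by (subst degree_add_eq_left) auto
  have cPn: "coeff P n = 1" unfolding P_def using lcP cdP[of n] d_lt by simp
  have cP: "coeff P k = coeff Papp k + coeff dP k" for k unfolding P_def by simp
  obtain y where y: "val (coeff Papp d) = ereal y" "(real d, y) extreme_point_of newton_polygon val Papp"
    using extr by blast
  have yd: "PA.j0 \<le> d" "d \<le> n" "y = PA.hr d" using PA.ext_y[OF y(2)] by auto
  have j0d: "PA.j0 < d"
  proof -
    obtain j where j: "j < d" "coeff Papp j \<noteq> 0" using low by blast
    have "PA.H j \<noteq> \<infinity>" using PA.H_le[of j] j d_lt val_inf_iff[of "coeff Papp j"] by auto
    hence "PA.j0 \<le> j" using PA.j0_leI j d_lt by simp
    thus ?thesis using j by simp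
  qed
  define l0 where "l0 = PA.\<sigma> (d - 1)"
  define l1 where "l1 = PA.\<sigma> d"
  have l01: "l0 < l1" unfolding l0_def l1_def using PA.ext_strict[of d] y(2) yd j0d d_lt by simp
  have Hd: "PA.H d = ereal (PA.hr d)" using PA.H_hr yd by simp
  have valPd: "val (coeff P d) = ereal (PA.hr d)"
  proof -
    have "ereal (PA.hr d) < phiP (real d)" using nondeg2 y(2) yd d_lt by (auto simp: of_nat_diff)
    also have "\<dots> \<le> val (coeff dP d)" using dP_val d_lt by simp
    finally have "val (coeff Papp d) < val (coeff dP d)" using y yd by simp
    thus ?thesis unfolding cP using val_strict y yd by simp
  qed
  have HleP: "PA.H k \<le> val (coeff P k)" if k: "k \<le> n" for k
  proof (cases "k = n")
    case True thus ?thesis using PA.H_le[of n] cPn lcP by simp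
  next
    case False
    hence k1: "k \<le> n - 1" using k by simp
    have "PA.H k \<le> phiP (real k)" using nondeg1 k1 unfolding PA.H_def by (auto simp: of_nat_diff)
    also have "\<dots> \<le> val (coeff dP k)" using dP_val k1 by simp
    finally have "PA.H k \<le> val (coeff dP k)" .
    thus ?thesis unfolding cP using PA.H_le[OF k] by (intro lb_add) auto
  qed
  have hr_ge_d: "PA.hr d + l1 * (real k - real d) \<le> PA.hr k" if "PA.j0 \<le> k" "k \<le> n" for k
  proof (cases "d \<le> k")
    case True thus ?thesis unfolding l1_def using PA.hr_lower_right[of d k] yd d_lt that by simp
  next
    case False
    have "PA.hr d - l0 * (real d - real k) \<le> PA.hr k"
      unfolding l0_def using PA.hr_lower_left[of k d] that False d_pos yd by simp
    moreover have "l1 * (real k - real d) \<le> - l0 * (real d - real k)"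
    proof -
      have "0 \<le> (l1 - l0) * (real d - real k)" using l01 False by simp
      thus ?thesis by (simp add: algebra_simps)
    qed
    ultimately show ?thesis by simp
  qed
  have Pbound: "ereal (PA.hr d - l1 * real d + l1 * real k) \<le> val (coeff P k)" for k
  proof (cases "n < k")
    case True thus ?thesis using degP by (simp add: coeff_eq_0)
  next
    case False
    show ?thesis
    proof (cases "k < PA.j0")
      case True
      hence "PA.H k = \<infinity>" by (rule PA.H_inf)
      thus ?thesis using HleP[of k] False by simp
    next
      case F2: False
      have "ereal (PA.hr d - l1 * real d + l1 * real k) \<le> ereal (PA.hr k)"
        using hr_ge_d[of k] F2 False by (simp add: algebra_simps)
      also have "\<dots> \<le> val (coeff P k)" using HleP[of k] PA.H_hr[of k] F2 False by simp
      finally show ?thesis .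
    qed
  qed
  have conv_app: "convex_ereal_on {0..real (degree P)} (newton_fun val Papp)" using PA.conv degP by simp
  have convP: "convex_ereal_on {0..real n} (newton_fun val P)" using nf_convex[of P] degP by simp
  have vtx_P: "newton_fun val P (real v) \<le> ereal (PA.hr v)" if v: "PA.vtx v" for v
  proof -
    have vn: "v \<le> n" using v unfolding PA.vtx_def by simp
    have va: "val (coeff Papp v) = ereal (PA.hr v)" by (rule PA.vtx_val[OF v])
    have "val (coeff P v) = ereal (PA.hr v)"
    proof (cases "v = n")
      case True thus ?thesis using cPn lcP va by simp
    next
      case False
      hence v1: "v \<le> n - 1" using vn by simp
      have "ereal (PA.hr v) < phiP (real v)"
        using nondeg2 PA.vtx_extreme[OF v] v1 by (auto simp: of_nat_diff)
      also have "\<dots> \<le> val (coeff dP v)" using dP_val v1 by simp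
      finally have "val (coeff Papp v) < val (coeff dP v)" using va by simp
      thus ?thesis unfolding cP using val_strict va by simp
    qed
    thus ?thesis using nf_le_coeff[of v P val] degP vn by simp
  qed
  have part1: "\<forall>x\<in>{0..real n}. newton_fun val P x = newton_fun val Papp x"
  proof
    fix x assume x: "x \<in> {0..real n}"
    have ge: "newton_fun val Papp x \<le> newton_fun val P x"
    proof (rule nf_upper[OF conv_app])
      fix i assume "i \<le> degree P"
      thus "newton_fun val Papp (real i) \<le> val (coeff P i)" using HleP[of i] degP unfolding PA.H_def by simp
    qed
    have le: "newton_fun val P x \<le> newton_fun val Papp x"
    proof (rule nf_upper)
      show "convex_ereal_on {0..real (degree Papp)} (newton_fun val P)" using convP deg by simp
      fix i assume i: "i \<le> degree Papp"
      show "newton_fun val P (real i) \<le> val (coeff Papp i)"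
      proof (cases "i < PA.j0")
        case True thus ?thesis using PA.coeff_zero_below by simp
      next
        case False
        have "newton_fun val P (real i) \<le> ereal (PA.hr i)"
          using PA.below_via_vtx[OF convP vtx_P] False i deg by simp
        also have "\<dots> \<le> val (coeff Papp i)" using PA.hr_le_val False i deg by simp
        finally show ?thesis .
      qed
    qed
    show "newton_fun val P x = newton_fun val Papp x" using ge le by simp
  qed
  define \<psi> where "\<psi> k = (if k \<le> d then PA.hr k else PA.hr d + l0 * (real k - real d))" for k
  have psid: "\<psi> d = PA.hr d" unfolding \<psi>_def by simp
  have hr_le_d: "PA.hr d \<le> PA.hr i + l0 * (real d - real i)" if "PA.j0 \<le> i" "i \<le> d" for i
    unfolding l0_def using PA.hr_lower_left[of i d] that d_pos yd by simp
  have Hpsi: "\<psi> (i + j) \<le> \<psi> i + l0 * real j" if ij: "PA.j0 \<le> i" for i j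
  proof (cases "i + j \<le> d")
    case True
    show ?thesis
    proof (cases "j = 0")
      case True thus ?thesis by simp
    next
      case False
      have a: "PA.hr (i + j) - PA.\<sigma> (i + j - 1) * (real (i + j) - real i) \<le> PA.hr i"
        using PA.hr_lower_left[of i "i + j"] ij True False yd by simp
      have b: "PA.\<sigma> (i + j - 1) \<le> l0" unfolding l0_def
        using PA.sigma_mono[of "i + j - 1" "d - 1"] ij True False yd d_lt by simp
      have "PA.\<sigma> (i + j - 1) * real j \<le> l0 * real j" using b by (simp add: mult_right_mono)
      thus ?thesis using a True unfolding \<psi>_def by simp
    qed
  next
    case False
    show ?thesis
    proof (cases "i \<le> d")
      case True
      have "PA.hr d + l0 * (real (i + j) - real d) \<le> PA.hr i + l0 * (real d - real i) + l0 * (real (i + j) - real d)"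
        using hr_le_d[OF ij True] by simp
      also have "\<dots> = PA.hr i + l0 * real j" by (simp add: algebra_simps)
      finally show ?thesis using True False unfolding \<psi>_def by simp
    next
      case F2: False
      thus ?thesis using False unfolding \<psi>_def by (simp add: algebra_simps)
    qed
  qed
  have Hlin: "\<psi> k = \<psi> d + l0 * (real k - real d)" if "d \<le> k" for k
    using that unfolding \<psi>_def by auto
  have nfPd1: "newton_fun val Papp (real d - 1) = ereal (PA.hr (d - 1))"
    using PA.H_hr[of "d - 1"] j0d d_lt d_pos unfolding PA.H_def by (simp add: of_nat_diff)
  have nfPd: "newton_fun val Papp (real d) = ereal (PA.hr d)" using Hd unfolding PA.H_def .
  have phi_nat: "phi_ext val Papp d (real k) = (if k < PA.j0 then \<infinity> else ereal (\<psi> k))" if "k \<le> n" for k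
  proof (cases "k \<le> d")
    case True
    thus ?thesis using PA.H_inf[of k] PA.H_hr[of k] that unfolding phi_ext_def PA.H_def \<psi>_def by auto
  next
    case False
    have "PA.j0 \<le> k" using j0d False by simp
    moreover have "PA.hr d - PA.hr (d - 1) = l0" unfolding l0_def PA.\<sigma>_def using d_pos by simp
    ultimately show ?thesis using False unfolding phi_ext_def nfPd1 nfPd \<psi>_def Let_def
      by (simp add: algebra_simps)
  qed
  define \<delta> where "\<delta> = (INF x \<in> {x\<in>{0..real (n - 1)}. phi_ext val Papp d x \<noteq> \<infinity>}. phiP x - phi_ext val Papp d x)"
  have delta_le: "\<delta> \<le> phiP (real k) - ereal (\<psi> k)" if "PA.j0 \<le> k" "k \<le> n - 1" for k
  proof -
    have "phi_ext val Papp d (real k) = ereal (\<psi> k)" using phi_nat[of k] that by simp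
    moreover have "real k \<in> {x\<in>{0..real (n - 1)}. phi_ext val Papp d x \<noteq> \<infinity>}" using that calculation by simp
    ultimately show ?thesis unfolding \<delta>_def by (metis (no_types, lifting) INF_lower)
  qed
  have phiP_nminf: "phiP x \<noteq> -\<infinity>" if "x \<in> {0..real (n - 1)}" for x
    using phiP_newton that unfolding newton_function_def convex_ereal_on_def by auto
  obtain \<delta>r where dr: "\<delta> = ereal \<delta>r" "0 < \<delta>r"
  proof -
    have "PA.j0 \<le> n - 1" using j0d d_lt by simp
    hence "\<delta> \<le> phiP (real (n - 1)) - ereal (\<psi> (n - 1))" using delta_le by simp
    moreover have "phiP (real (n - 1)) \<noteq> \<infinity>" using phiP_newton unfolding newton_function_def by simp
    ultimately have "\<delta> \<noteq> \<infinity>" by (cases "phiP (real (n - 1))") auto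
    moreover have "0 < \<delta>" using delta_pos unfolding \<delta>_def .
    ultimately show ?thesis using that by (cases \<delta>) auto
  qed
  have bnd_dP: "bnd PA.j0 \<psi> dP \<delta>r" unfolding bnd_def
  proof (intro conjI allI impI)
    fix k assume k: "k < PA.j0"
    hence "phi_ext val Papp d (real k) = \<infinity>" using phi_nat[of k] PA.j0_le by simp
    hence "newton_fun val Papp (real k) = \<infinity>" using k j0d unfolding phi_ext_def by simp
    moreover have kn: "k \<le> n - 1" using k j0d d_lt by simp
    moreover have "real k \<in> {0..real (n - 1)}" using kn by simp
    ultimately have "\<infinity> \<le> phiP (real k)" using nondeg1 by metis
    moreover have "phiP (real k) \<le> val (coeff dP k)" using dP_val kn by simp
    ultimately have "val (coeff dP k) = \<infinity>" by simp
    thus "coeff dP k = 0" using val_inf_iff by simp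
  next
    fix k
    show "ereal (\<psi> k + \<delta>r) \<le> val (coeff dP k)"
    proof (cases "n - 1 < k")
      case True thus ?thesis using cdP by simp
    next
      case False
      show ?thesis
      proof (cases "k < PA.j0")
        case True
        have "phi_ext val Papp d (real k) = \<infinity>" using phi_nat[of k] True PA.j0_le by simp
        hence "newton_fun val Papp (real k) = \<infinity>" using True j0d unfolding phi_ext_def by simp
        moreover have kn: "k \<le> n - 1" using False by simp
        moreover have "real k \<in> {0..real (n - 1)}" using kn by simp
        ultimately have "\<infinity> \<le> phiP (real k)" using nondeg1 by metis
        moreover have "phiP (real k) \<le> val (coeff dP k)" using dP_val kn by simp
        ultimately have "val (coeff dP k) = \<infinity>" by simp
        thus ?thesis by simp
      next
        case F2: False
        have dl: "ereal \<delta>r \<le> phiP (real k) - ereal (\<psi> k)" using delta_le[of k] F2 False dr by simp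
        have "ereal (\<psi> k + \<delta>r) \<le> phiP (real k)"
          using dl phiP_nminf[of "real k"] False by (cases "phiP (real k)") (auto simp: of_nat_diff)
        also have "\<dots> \<le> val (coeff dP k)" using dP_val False by simp
        finally show ?thesis .
      qed
    qed
  qed
  have Xfacts: "coeff X d = 1 \<and> bnd PA.j0 \<psi> X (- \<psi> d) \<and> (\<forall>i. ereal (l1 * (real i - real d)) \<le> val (coeff X i))"
    if X: "lead_coeff X = 1" "degree X = d"
      "\<forall>x\<in>{0..real d}. newton_fun val X x = newton_fun val Papp x - newton_fun val Papp (real d)" for X
  proof -
    have cXd: "coeff X d = 1" using X by simp
    have nfX: "newton_fun val X (real i) = PA.H i - ereal (PA.hr d)" if "i \<le> d" for i
      using X(3) that nfPd unfolding PA.H_def by simp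
    have vX: "PA.H i - ereal (PA.hr d) \<le> val (coeff X i)" if "i \<le> d" for i
      using nf_le_coeff[of i X val] X(2) nfX that by simp
    have z: "coeff X i = 0" if "i < PA.j0" for i
    proof -
      have "PA.H i = \<infinity>" using PA.H_inf that by simp
      hence "val (coeff X i) = \<infinity>" using vX[of i] that j0d by simp
      thus ?thesis using val_inf_iff by simp
    qed
    have mid: "ereal (PA.hr i - PA.hr d) \<le> val (coeff X i)" if "PA.j0 \<le> i" "i \<le> d" for i
      using vX[of i] PA.H_hr[of i] that yd by simp
    have b: "bnd PA.j0 \<psi> X (- \<psi> d)" unfolding bnd_def
    proof (intro conjI allI impI)
      fix k assume "k < PA.j0" thus "coeff X k = 0" by (rule z)
    next
      fix k
      show "ereal (\<psi> k + - \<psi> d) \<le> val (coeff X k)"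
      proof (cases "d < k")
        case True thus ?thesis using X(2) by (simp add: coeff_eq_0)
      next
        case False
        show ?thesis
        proof (cases "k < PA.j0")
          case True thus ?thesis using z by simp
        next
          case F2: False thus ?thesis using mid[of k] False unfolding \<psi>_def by simp
        qed
      qed
    qed
    have l: "ereal (l1 * (real i - real d)) \<le> val (coeff X i)" for i
    proof (cases "d < i")
      case True thus ?thesis using X(2) by (simp add: coeff_eq_0)
    next
      case False
      show ?thesis
      proof (cases "i < PA.j0")
        case True thus ?thesis using z by simp
      next
        case F2: False
        have "0 \<le> (l1 - l0) * (real d - real i)" using l01 False by simp
        hence "l1 * (real i - real d) \<le> PA.hr i - PA.hr d" using hr_le_d[of i] F2 False
          by (simp add: algebra_simps)
        hence "ereal (l1 * (real i - real d)) \<le> ereal (PA.hr i - PA.hr d)" by simp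
        moreover have "ereal (PA.hr i - PA.hr d) \<le> val (coeff X i)" using mid[of i] F2 False by simp
        ultimately show ?thesis by (rule order_trans)
      qed
    qed
    show ?thesis using cXd b l by blast
  qed
  have part2: "\<forall>A Aapp.
            lead_coeff A = 1 \<and> degree A = d \<and> A dvd Papp + dP \<and>
            (\<forall>x\<in>{0..real d}. newton_fun val A x =
                newton_fun val Papp x - newton_fun val Papp (real d)) \<and>
            lead_coeff Aapp = 1 \<and> degree Aapp = d \<and> Aapp dvd Papp \<and>
            (\<forall>x\<in>{0..real d}. newton_fun val Aapp x =
                newton_fun val Papp x - newton_fun val Papp (real d))
            \<longrightarrow>
            (\<forall>i<d. phi_ext val Papp d (real i) - phi_ext val Papp d (real d) + \<delta>
                   \<le> val (coeff (A - Aapp) i))"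
  proof (intro allI impI)
    fix A Aapp :: "'k poly" and i
    assume H: "lead_coeff A = 1 \<and> degree A = d \<and> A dvd Papp + dP \<and>
            (\<forall>x\<in>{0..real d}. newton_fun val A x =
                newton_fun val Papp x - newton_fun val Papp (real d)) \<and>
            lead_coeff Aapp = 1 \<and> degree Aapp = d \<and> Aapp dvd Papp \<and>
            (\<forall>x\<in>{0..real d}. newton_fun val Aapp x =
                newton_fun val Papp x - newton_fun val Papp (real d))"
      and i: "i < d"
    have XA: "coeff A d = 1" "bnd PA.j0 \<psi> A (- \<psi> d)" "\<And>i. ereal (l1 * (real i - real d)) \<le> val (coeff A i)"
      using Xfacts[of A] H by auto
    have XAa: "coeff Aapp d = 1" "bnd PA.j0 \<psi> Aapp (- \<psi> d)"
      using Xfacts[of Aapp] H by auto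
    have degA: "degree A = d" "degree Aapp = d" using H by auto
    have "A dvd P" using H unfolding P_def by blast
    then obtain B where PAB: "P = A * B" by (rule dvdE)
    have "Aapp dvd Papp" using H by blast
    then obtain Bapp where PAB2: "Papp = Aapp * Bapp" by (rule dvdE)
    have Bl: "ereal (PA.hr d + l1 * real j) \<le> val (coeff B j)" for j
    proof -
      have "ereal (PA.hr d - l1 * real d + l1 * (real j + real d)) \<le> val (coeff B j)"
        using hi_lemma[of A d l1 "PA.hr d - l1 * real d" B j] degA XA Pbound unfolding PAB by blast
      thus ?thesis by (simp add: algebra_simps)
    qed
    have vb0: "val (coeff B 0) = ereal (PA.hr d)"
    proof (rule ccontr)
      assume ne: "val (coeff B 0) \<noteq> ereal (PA.hr d)"
      hence lt: "ereal (PA.hr d) < val (coeff B 0)" using Bl[of 0] by simp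
      have "ereal (PA.hr d) < val (coeff P d)" unfolding PAB coeff_mult
      proof (rule slb_sum)
        fix k assume k: "k \<in> {..d}"
        show "ereal (PA.hr d) < val (coeff A k * coeff B (d - k))"
        proof (cases "k = d")
          case True thus ?thesis using lt XA by simp
        next
          case False
          hence kd: "k < d" using k by simp
          show ?thesis
          proof (cases "coeff A k = 0")
            case True thus ?thesis by simp
          next
            case nz: False
            have kj: "PA.j0 \<le> k" using XA(2) nz unfolding bnd_def by (meson not_less)
            have ak: "ereal (PA.hr k - PA.hr d) \<le> val (coeff A k)"
              using XA(2) kd kj unfolding bnd_def \<psi>_def by (auto split: if_splits)
            have c: "ereal ((PA.hr k - PA.hr d) + (PA.hr d + l1 * real (d - k))) \<le> val (coeff A k * coeff B (d - k))"
              using ak Bl by (intro lb_mult)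
            have "0 < (l1 - l0) * (real d - real k)" using l01 kd by simp
            hence "PA.hr d < (PA.hr k - PA.hr d) + (PA.hr d + l1 * real (d - k))"
              using hr_le_d[of k] kj kd by (simp add: algebra_simps of_nat_diff)
            hence "ereal (PA.hr d) < ereal ((PA.hr k - PA.hr d) + (PA.hr d + l1 * real (d - k)))" by simp
            thus ?thesis using c by (rule order_less_le_trans)
          qed
        qed
      qed simp
      thus False using valPd by simp
    qed
    have b0: "coeff B 0 \<noteq> 0" using vb0 by auto
    have Bs: "ereal (PA.hr d + l0 * real j) < val (coeff B j)" if "1 \<le> j" for j
    proof -
      have "l0 * real j < l1 * real j" using l01 that by simp
      hence "ereal (PA.hr d + l0 * real j) < ereal (PA.hr d + l1 * real j)" by simp
      thus ?thesis using Bl[of j] by (rule order_less_le_trans)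
    qed
    have degE: "degree (A - Aapp) < d"
    proof -
      have "degree (A - Aapp) \<le> d - 1"
      proof (rule degree_le, intro allI impI)
        fix m assume m: "d - 1 < m"
        show "coeff (A - Aapp) m = 0"
        proof (cases "m = d")
          case True thus ?thesis using XA XAa by simp
        next
          case False
          hence "d < m" using m by simp
          thus ?thesis using degA by (simp add: coeff_eq_0)
        qed
      qed
      thus ?thesis using d_pos by simp
    qed
    have Ez: "coeff (A - Aapp) k = 0" if "k < PA.j0" for k
      using XA(2) XAa(2) that unfolding bnd_def by simp
    have eq: "((A - Aapp) * B) mod Aapp = dP mod Aapp"
    proof -
      have "dP = (A - Aapp) * B + Aapp * (B - Bapp)"
      proof -
        have "dP = P - Papp" unfolding P_def by simp
        also have "\<dots> = A * B - Aapp * Bapp" using PAB PAB2 by simp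
        also have "\<dots> = (A - Aapp) * B + Aapp * (B - Bapp)" by (simp add: algebra_simps)
        finally show ?thesis .
      qed
      thus ?thesis by (metis mod_mult_self2)
    qed
    have res: "ereal (\<psi> k + \<delta>r - PA.hr d) \<le> val (coeff (A - Aapp) k)" for k
      using core2[of Aapp d PA.j0 \<psi> l0 "A - Aapp" B "PA.hr d" dP \<delta>r k] degA XAa d_pos Hpsi Hlin
        degE Ez b0 vb0 Bs eq bnd_dP psid by simp
    have phid: "phi_ext val Papp d (real d) = ereal (PA.hr d)" using phi_nat[of d] yd psid by simp
    show "phi_ext val Papp d (real i) - phi_ext val Papp d (real d) + \<delta> \<le> val (coeff (A - Aapp) i)"
    proof (cases "i < PA.j0")
      case True
      thus ?thesis using Ez[OF True] by simp
    next
      case False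
      have "phi_ext val Papp d (real i) = ereal (\<psi> i)" using phi_nat[of i] False i d_lt by simp
      hence "phi_ext val Papp d (real i) - phi_ext val Papp d (real d) + \<delta> = ereal (\<psi> i + \<delta>r - PA.hr d)"
        using phid dr by simp
      thus ?thesis using res[of i] by simp
    qed
  qed
  show ?thesis using part1 part2 unfolding P_def \<delta>_def by blast
qed


end
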